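(* Let $(A,* )$ be an involutive associative algebra, $(M,* )$ an involutive $A$-bimodule, and $T:M\to A$ a relative Rota-Baxter operator on $A$ with respect to $M$. Then the maps $l_T:M\otimes A\to A$, $l_T(u,a)=T(u)a-T(ua)$, and $r_T:A\otimes M\to A$, $r_T(a,u)=aT(u)-T(au)$, define (as left and right actions respectively) an involutive bimodule structure on $(A,* )$ over the involutive associative algebra $(M,\circledast,* )$, where $u\circledast v=uT(v)+T(u)v$.
   Context: An involutive associative algebra is an associative algebra $A$ with a linear map $*:A\to A$ satisfying $a^{**}=a$ and $(ab)^*=b^*a^*$. An involutive $A$-bimodule is an $A$-bimodule $M$ with a linear map $*:M\to M$ such that $u^{**}=u$, $(au)^*=u^*a^*$, $(ua)^*=a^*u^*$. A relative Rota-Baxter operator on $A$ with respect to $M$ is a linear map $T:M\to A$ with $T(u^* )=T(u)^*$ and $T(u)T(v)=T(uT(v)+T(u)v)$ for $u,v\in M$; in this situation $(M,\circledast,* )$ is an involutive associative algebra. An involutive bimodule over an involutive algebra $(N,* )$ is an $N$-bimodule $P$ with an involution satisfying $(xp)^*=p^*x^*$, $(px)^*=x^*p^*$ for $x\in N$, $p\in P$. *)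

theory Defs
  imports Complex_Main
begin

text \<open>All structures are vector spaces over a common field of type 'k; additive structure
comes from the type class ab_group_add, scalar multiplications and products are explicit.\<close>

definition bilinear_map ::
  "('k::field \<Rightarrow> 'a::ab_group_add \<Rightarrow> 'a) \<Rightarrow> ('k \<Rightarrow> 'b::ab_group_add \<Rightarrow> 'b) \<Rightarrow>
   ('k \<Rightarrow> 'c::ab_group_add \<Rightarrow> 'c) \<Rightarrow> ('a \<Rightarrow> 'b \<Rightarrow> 'c) \<Rightarrow> bool" where
  "bilinear_map sa sb sc f \<longleftrightarrow>
     (\<forall>x. Vector_Spaces.linear sb sc (f x)) \<and> (\<forall>y. Vector_Spaces.linear sa sc (\<lambda>x. f x y))"

definition assoc_algebra ::
  "('k::field \<Rightarrow> 'a::ab_group_add \<Rightarrow> 'a) \<Rightarrow> ('a \<Rightarrow> 'a \<Rightarrow> 'a) \<Rightarrow> bool" where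
  "assoc_algebra s mul \<longleftrightarrow> vector_space s \<and> bilinear_map s s s mul \<and>
     (\<forall>x y z. mul (mul x y) z = mul x (mul y z))"

definition involutive_algebra ::
  "('k::field \<Rightarrow> 'a::ab_group_add \<Rightarrow> 'a) \<Rightarrow> ('a \<Rightarrow> 'a \<Rightarrow> 'a) \<Rightarrow> ('a \<Rightarrow> 'a) \<Rightarrow> bool" where
  "involutive_algebra s mul star \<longleftrightarrow> assoc_algebra s mul \<and> Vector_Spaces.linear s s star \<and>
     (\<forall>x. star (star x) = x) \<and> (\<forall>x y. star (mul x y) = mul (star y) (star x))"

definition bimodule ::
  "('k::field \<Rightarrow> 'a::ab_group_add \<Rightarrow> 'a) \<Rightarrow> ('a \<Rightarrow> 'a \<Rightarrow> 'a) \<Rightarrow>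
   ('k \<Rightarrow> 'm::ab_group_add \<Rightarrow> 'm) \<Rightarrow> ('a \<Rightarrow> 'm \<Rightarrow> 'm) \<Rightarrow> ('m \<Rightarrow> 'a \<Rightarrow> 'm) \<Rightarrow> bool" where
  "bimodule sA mul sM l r \<longleftrightarrow> assoc_algebra sA mul \<and> vector_space sM \<and>
     bilinear_map sA sM sM l \<and> bilinear_map sM sA sM r \<and>
     (\<forall>a b u. l (mul a b) u = l a (l b u)) \<and>
     (\<forall>a b u. r u (mul a b) = r (r u a) b) \<and>
     (\<forall>a b u. r (l a u) b = l a (r u b))"

definition involutive_bimodule ::
  "('k::field \<Rightarrow> 'a::ab_group_add \<Rightarrow> 'a) \<Rightarrow> ('a \<Rightarrow> 'a \<Rightarrow> 'a) \<Rightarrow> ('a \<Rightarrow> 'a) \<Rightarrow>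
   ('k \<Rightarrow> 'm::ab_group_add \<Rightarrow> 'm) \<Rightarrow> ('a \<Rightarrow> 'm \<Rightarrow> 'm) \<Rightarrow> ('m \<Rightarrow> 'a \<Rightarrow> 'm) \<Rightarrow> ('m \<Rightarrow> 'm) \<Rightarrow> bool" where
  "involutive_bimodule sA mul starA sM l r starM \<longleftrightarrow>
     involutive_algebra sA mul starA \<and> bimodule sA mul sM l r \<and>
     Vector_Spaces.linear sM sM starM \<and> (\<forall>u. starM (starM u) = u) \<and>
     (\<forall>a u. starM (l a u) = r (starM u) (starA a)) \<and>
     (\<forall>a u. starM (r u a) = l (starA a) (starM u))"

definition relative_RB ::
  "('k::field \<Rightarrow> 'a::ab_group_add \<Rightarrow> 'a) \<Rightarrow> ('a \<Rightarrow> 'a \<Rightarrow> 'a) \<Rightarrow> ('a \<Rightarrow> 'a) \<Rightarrow>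
   ('k \<Rightarrow> 'm::ab_group_add \<Rightarrow> 'm) \<Rightarrow> ('a \<Rightarrow> 'm \<Rightarrow> 'm) \<Rightarrow> ('m \<Rightarrow> 'a \<Rightarrow> 'm) \<Rightarrow> ('m \<Rightarrow> 'm) \<Rightarrow>
   ('m \<Rightarrow> 'a) \<Rightarrow> bool" where
  "relative_RB sA mul starA sM l r starM T \<longleftrightarrow>
     Vector_Spaces.linear sM sA T \<and> (\<forall>u. T (starM u) = starA (T u)) \<and>
     (\<forall>u v. mul (T u) (T v) = T (r u (T v) + l (T u) v))"

definition RB_prod ::
  "('a \<Rightarrow> 'm \<Rightarrow> 'm::ab_group_add) \<Rightarrow> ('m \<Rightarrow> 'a \<Rightarrow> 'm) \<Rightarrow> ('m \<Rightarrow> 'a) \<Rightarrow> 'm \<Rightarrow> 'm \<Rightarrow> 'm" where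
  "RB_prod l r T u v = r u (T v) + l (T u) v"

definition lT ::
  "('a::ab_group_add \<Rightarrow> 'a \<Rightarrow> 'a) \<Rightarrow> ('m \<Rightarrow> 'a \<Rightarrow> 'm) \<Rightarrow> ('m \<Rightarrow> 'a) \<Rightarrow> 'm \<Rightarrow> 'a \<Rightarrow> 'a" where
  "lT mul r T u a = mul (T u) a - T (r u a)"

definition rT ::
  "('a::ab_group_add \<Rightarrow> 'a \<Rightarrow> 'a) \<Rightarrow> ('a \<Rightarrow> 'm \<Rightarrow> 'm) \<Rightarrow> ('m \<Rightarrow> 'a) \<Rightarrow> 'a \<Rightarrow> 'm \<Rightarrow> 'a" where
  "rT mul l T a u = mul a (T u) - T (l a u)"

end

theory Submission
  imports Defs
begin

lemma add_diff_hom: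
  assumes "\<forall>x y. f (x + y) = f x + f y"
  shows "f (x - y) = (f x :: 'b::ab_group_add) - f (y :: 'a::ab_group_add)"
proof -
  have "f x = f ((x - y) + y)" by simp
  also have "\<dots> = f (x - y) + f y" using assms by blast
  finally show ?thesis by (simp add: algebra_simps)
qed

theorem mainTheorem4:
  fixes sA :: "'k::field \<Rightarrow> 'a::ab_group_add \<Rightarrow> 'a"
    and mul :: "'a \<Rightarrow> 'a \<Rightarrow> 'a" and starA :: "'a \<Rightarrow> 'a"
    and sM :: "'k \<Rightarrow> 'm::ab_group_add \<Rightarrow> 'm"
    and l :: "'a \<Rightarrow> 'm \<Rightarrow> 'm" and r :: "'m \<Rightarrow> 'a \<Rightarrow> 'm" and starM :: "'m \<Rightarrow> 'm"
    and T :: "'m \<Rightarrow> 'a"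
  assumes "involutive_bimodule sA mul starA sM l r starM"
    and "relative_RB sA mul starA sM l r starM T"
  shows "involutive_bimodule sM (RB_prod l r T) starM sA (lT mul r T) (rT mul l T) starA"
proof -
  note H = assms[unfolded involutive_bimodule_def involutive_algebra_def bimodule_def
      assoc_algebra_def bilinear_map_def relative_RB_def Vector_Spaces.linear_iff]
  have vsA: "vector_space sA" and vsM: "vector_space sM" using H by auto
  have mA1: "\<And>x y z. mul (x+y) z = mul x z + mul y z"
    and mA2: "\<And>x y z. mul x (y+z) = mul x y + mul x z"
    and mS1: "\<And>c x y. mul (sA c x) y = sA c (mul x y)"
    and mS2: "\<And>c x y. mul x (sA c y) = sA c (mul x y)"
    and assoc: "\<And>x y z. mul (mul x y) z = mul x (mul y z)"
    using H by (auto simp: Vector_Spaces.linear_iff)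
  have l1: "\<And>a b u. l (a+b) u = l a u + l b u"
    and l2: "\<And>a u v. l a (u+v) = l a u + l a v"
    and lS1: "\<And>c a u. l (sA c a) u = sM c (l a u)"
    and lS2: "\<And>c a u. l a (sM c u) = sM c (l a u)"
    and r1: "\<And>a u v. r (u+v) a = r u a + r v a"
    and r2: "\<And>a b u. r u (a+b) = r u a + r u b"
    and rS1: "\<And>c a u. r (sM c u) a = sM c (r u a)"
    and rS2: "\<And>c a u. r u (sA c a) = sM c (r u a)"
    and ll: "\<And>a b u. l (mul a b) u = l a (l b u)"
    and rr: "\<And>a b u. r u (mul a b) = r (r u a) b"
    and lr: "\<And>a b u. r (l a u) b = l a (r u b)"
    using H by (auto simp: Vector_Spaces.linear_iff)
  have T1: "\<And>u v. T (u+v) = T u + T v" and TS: "\<And>c u. T (sM c u) = sA c (T u)"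
    and sA1: "\<And>a b. starA (a+b) = starA a + starA b" and sAS: "\<And>c a. starA (sA c a) = sA c (starA a)"
    and sM1: "\<And>u v. starM (u+v) = starM u + starM v" and sMS: "\<And>c u. starM (sM c u) = sM c (starM u)"
    and sAA: "\<And>a. starA (starA a) = a" and sMM: "\<And>u. starM (starM u) = u"
    and sAmul: "\<And>a b. starA (mul a b) = mul (starA b) (starA a)"
    and sMl: "\<And>a u. starM (l a u) = r (starM u) (starA a)"
    and sMr: "\<And>a u. starM (r u a) = l (starA a) (starM u)"
    and TsM: "\<And>u. T (starM u) = starA (T u)"
    and rb: "\<And>u v. mul (T u) (T v) = T (r u (T v) + l (T u) v)"
    using H by (auto simp: Vector_Spaces.linear_iff)
  have mD1: "\<And>x y z. mul (x-y) z = mul x z - mul y z"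
    by (rule add_diff_hom[where f="\<lambda>x. mul x _", simplified]) (simp add: mA1)
  have mD2: "\<And>x y z. mul x (y-z) = mul x y - mul x z"
    by (rule add_diff_hom[where f="\<lambda>y. mul _ y", simplified]) (simp add: mA2)
  have lD1: "\<And>a b u. l (a-b) u = l a u - l b u"
    by (rule add_diff_hom[where f="\<lambda>x. l x _", simplified]) (simp add: l1)
  have lD2: "\<And>a u v. l a (u-v) = l a u - l a v"
    by (rule add_diff_hom[where f="\<lambda>x. l _ x", simplified]) (simp add: l2)
  have rD1: "\<And>a u v. r (u-v) a = r u a - r v a"
    by (rule add_diff_hom[where f="\<lambda>x. r x _", simplified]) (simp add: r1)
  have rD2: "\<And>a b u. r u (a-b) = r u a - r u b"
    by (rule add_diff_hom[where f="\<lambda>x. r _ x", simplified]) (simp add: r2)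
  have TD: "\<And>u v. T (u-v) = T u - T v"
    by (rule add_diff_hom[where f="T", simplified]) (simp add: T1)
  have sAD: "\<And>a b. starA (a-b) = starA a - starA b"
    by (rule add_diff_hom[where f="starA", simplified]) (simp add: sA1)
  have scA: "\<And>c x y. sA c (x + y) = sA c x + sA c y"
    using vsA by (simp add: vector_space.vector_space_assms(1))
  have scM: "\<And>c x y. sM c (x + y) = sM c x + sM c y"
    using vsM by (simp add: vector_space.vector_space_assms(1))
  have scAD: "\<And>c x y. sA c (x - y) = sA c x - sA c y"
    by (rule add_diff_hom[where f="sA _", simplified]) (simp add: scA)
  note simps = mA1 mA2 mS1 mS2 l1 l2 lS1 lS2 r1 r2 rS1 rS2 T1 TS sA1 sAS sM1 sMS
    mD1 mD2 lD1 lD2 rD1 rD2 TD sAD scA scM scAD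
  have TRB: "\<And>u v. T (RB_prod l r T u v) = mul (T u) (T v)"
    by (simp add: RB_prod_def rb)
  have RBassoc: "\<And>u v w. RB_prod l r T (RB_prod l r T u v) w = RB_prod l r T u (RB_prod l r T v w)"
  proof -
    fix u v w
    have "RB_prod l r T (RB_prod l r T u v) w = r (RB_prod l r T u v) (T w) + l (T (RB_prod l r T u v)) w"
      by (rule RB_prod_def)
    also have "\<dots> = r (RB_prod l r T u v) (T w) + l (mul (T u) (T v)) w"
      unfolding TRB ..
    also have "\<dots> = r u (mul (T v) (T w)) + l (T u) (r v (T w)) + l (T u) (l (T v) w)"
      unfolding RB_prod_def by (simp add: r1 rr[symmetric] ll lr add_ac)
    also have "\<dots> = r u (T (RB_prod l r T v w)) + l (T u) (RB_prod l r T v w)"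
      unfolding TRB unfolding RB_prod_def by (simp add: l2 add_ac)
    also have "\<dots> = RB_prod l r T u (RB_prod l r T v w)"
      by (rule RB_prod_def[symmetric])
    finally show "RB_prod l r T (RB_prod l r T u v) w = RB_prod l r T u (RB_prod l r T v w)" .
  qed
  have alg: "involutive_algebra sM (RB_prod l r T) starM"
    unfolding involutive_algebra_def assoc_algebra_def bilinear_map_def Vector_Spaces.linear_iff
    using vsM RBassoc sMM
    by (simp add: RB_prod_def simps sMl sMr TsM add_ac)
  have lTT: "\<And>u v a. lT mul r T (RB_prod l r T u v) a = lT mul r T u (lT mul r T v a)"
  proof -
    fix u v a
    show "lT mul r T (RB_prod l r T u v) a = lT mul r T u (lT mul r T v a)"
      unfolding lT_def TRB unfolding RB_prod_def
      by (simp add: simps assoc rr[symmetric] ll lr rb[of u "r v a"] algebra_simps)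
  qed
  have rTT: "\<And>u v a. rT mul l T a (RB_prod l r T u v) = rT mul l T (rT mul l T a u) v"
  proof -
    fix u v a
    show "rT mul l T a (RB_prod l r T u v) = rT mul l T (rT mul l T a u) v"
      unfolding rT_def TRB unfolding RB_prod_def
      by (simp add: simps assoc rr[symmetric] ll lr rb[of "l a u" v] algebra_simps)
  qed
  have lrT: "\<And>u v a. rT mul l T (lT mul r T u a) v = lT mul r T u (rT mul l T a v)"
  proof -
    fix u v a
    show "rT mul l T (lT mul r T u a) v = lT mul r T u (rT mul l T a v)"
      unfolding rT_def lT_def
      by (simp add: simps assoc rr[symmetric] ll lr rb[of "r u a" v] rb[of u "l a v"] algebra_simps)
  qed
  have bim: "bimodule sM (RB_prod l r T) sA (lT mul r T) (rT mul l T)"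
    unfolding bimodule_def bilinear_map_def Vector_Spaces.linear_iff
    using alg vsA vsM lTT rTT lrT
    by (simp add: involutive_algebra_def lT_def rT_def simps algebra_simps)
  show ?thesis
    unfolding involutive_bimodule_def Vector_Spaces.linear_iff
    using alg bim vsA sAA
    by (simp add: lT_def rT_def simps sAmul TsM[symmetric] sMl sMr)
qed

end
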